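(* In the setting where $A,B$ are strongly regular graphs with the same parameters, $A',B'$ are obtained by individualizing one port vertex each, $G=G(A',B')$ and $H=G(A',A')$: let $x\in V(G)$ lie in the part $C\in\{A,B\}$ of $G$ and $y\in V(H)$ lie in a part $D$ of $H$ (one of the two copies of $A$). Let $C'_x$ denote $C$ with its port vertex individualized and $x$ additionally individualized (with a different color), and similarly $D'_y$. If $\mathrm{WL}_1(C'_x)\ne\mathrm{WL}_1(D'_y)$, then $\mathrm{WL}_1(G_x)\ne\mathrm{WL}_1(H_y)$.
   Context: Graphs are finite, simple and undirected. A strongly regular graph with parameters $(n,d,\lambda,\mu)$ is an $n$-vertex $d$-regular graph in which any two adjacent vertices have $\lambda$ common neighbours and any two distinct non-adjacent vertices have $\mu$ common neighbours. $A'$ ($B'$) is $A$ ($B$) with a single port vertex $a_1$ ($b_1$) colored $1$ and others uncolored. $G(A',B')$ (uncolored) is the vertex-disjoint union of $A$ and $B$ plus a connecting vertex $c_1$ adjacent to $a_1$ and $b_1$ and a pendant vertex adjacent only to $c_1$; $H=G(A',A')$ uses two disjoint copies of $A'$. Color refinement on a vertex-colored $N$-vertex graph $X$: $C^0(x)$ is the color of $x$ (common default for uncolored vertices), $C^{r+1}(x)=\big(C^r(x),\{\!\{C^r(y)\}\!\}_{y\in N(x)}\big)$ ($\{\!\{\cdot\}\!\}$ = multiset), $\mathrm{WL}_1(X)=\{\!\{C^N(x)\}\!\}_{x}$. $G_x$ is $G$ with vertex $x$ given a special new color (the same special color for all choices of $x$). *)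

theory Defs
  imports Main "HOL-Library.Multiset"
begin

definition simple_graph :: "'a set \<Rightarrow> ('a \<Rightarrow> 'a \<Rightarrow> bool) \<Rightarrow> bool" where
  "simple_graph V E \<longleftrightarrow> finite V \<and> (\<forall>u v. E u v \<longrightarrow> E v u) \<and> (\<forall>v. \<not> E v v)
     \<and> (\<forall>u v. E u v \<longrightarrow> u \<in> V \<and> v \<in> V)"

definition nbrs :: "'a set \<Rightarrow> ('a \<Rightarrow> 'a \<Rightarrow> bool) \<Rightarrow> 'a \<Rightarrow> 'a set" where
  "nbrs V E x = {y \<in> V. E x y}"

definition strongly_regular ::
  "'a set \<Rightarrow> ('a \<Rightarrow> 'a \<Rightarrow> bool) \<Rightarrow> nat \<Rightarrow> nat \<Rightarrow> nat \<Rightarrow> nat \<Rightarrow> bool" where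
  "strongly_regular V E n d lam mu \<longleftrightarrow> simple_graph V E \<and> card V = n
     \<and> (\<forall>v\<in>V. card (nbrs V E v) = d)
     \<and> (\<forall>u\<in>V. \<forall>v\<in>V. E u v \<longrightarrow> card (nbrs V E u \<inter> nbrs V E v) = lam)
     \<and> (\<forall>u\<in>V. \<forall>v\<in>V. u \<noteq> v \<longrightarrow> \<not> E u v \<longrightarrow> card (nbrs V E u \<inter> nbrs V E v) = mu)"

datatype clr = Default | Port | Special

datatype 'c crcol = Base 'c | Ref "'c crcol" "'c crcol multiset"

fun cr :: "'a set \<Rightarrow> ('a \<Rightarrow> 'a \<Rightarrow> bool) \<Rightarrow> ('a \<Rightarrow> 'c) \<Rightarrow> nat \<Rightarrow> 'a \<Rightarrow> 'c crcol" where
  "cr V E col 0 x = Base (col x)"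
| "cr V E col (Suc r) x = Ref (cr V E col r x) (image_mset (cr V E col r) (mset_set (nbrs V E x)))"

definition WL1 :: "'a set \<Rightarrow> ('a \<Rightarrow> 'a \<Rightarrow> bool) \<Rightarrow> ('a \<Rightarrow> 'c) \<Rightarrow> 'c crcol multiset" where
  "WL1 V E col = image_mset (cr V E col (card V)) (mset_set V)"

datatype 'a gv = L 'a | R 'a | Conn | Pend

definition gadgetV :: "'a set \<Rightarrow> 'a set \<Rightarrow> 'a gv set" where
  "gadgetV VA VB = L ` VA \<union> R ` VB \<union> {Conn, Pend}"

fun gadgetE0 :: "('a \<Rightarrow> 'a \<Rightarrow> bool) \<Rightarrow> 'a \<Rightarrow> ('a \<Rightarrow> 'a \<Rightarrow> bool) \<Rightarrow> 'a \<Rightarrow> 'a gv \<Rightarrow> 'a gv \<Rightarrow> bool" where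
  "gadgetE0 EA a1 EB b1 (L u) (L v) = EA u v"
| "gadgetE0 EA a1 EB b1 (R u) (R v) = EB u v"
| "gadgetE0 EA a1 EB b1 Conn (L u) = (u = a1)"
| "gadgetE0 EA a1 EB b1 Conn (R u) = (u = b1)"
| "gadgetE0 EA a1 EB b1 Conn Pend = True"
| "gadgetE0 EA a1 EB b1 _ _ = False"

definition gadgetE :: "('a \<Rightarrow> 'a \<Rightarrow> bool) \<Rightarrow> 'a \<Rightarrow> ('a \<Rightarrow> 'a \<Rightarrow> bool) \<Rightarrow> 'a \<Rightarrow> 'a gv \<Rightarrow> 'a gv \<Rightarrow> bool" where
  "gadgetE EA a1 EB b1 u v \<longleftrightarrow> gadgetE0 EA a1 EB b1 u v \<or> gadgetE0 EA a1 EB b1 v u"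

text \<open>G_x: the uncoloured graph with x given the special colour.\<close>
definition indiv :: "'v \<Rightarrow> 'v \<Rightarrow> clr" where
  "indiv x = (\<lambda>v. if v = x then Special else Default)"

text \<open>C'_x: port vertex p coloured 1 and x additionally given the special colour.\<close>
definition indiv_port :: "'v \<Rightarrow> 'v \<Rightarrow> 'v \<Rightarrow> clr" where
  "indiv_port p x = (\<lambda>v. if v = x then Special else if v = p then Port else Default)"

end

theory Submission
  imports Defs
begin


lemma cr_peel: "cr V E c (k + m) v = cr V' E' c' (k + m) v' \<Longrightarrow> cr V E c m v = cr V' E' c' m v'"
  by (induction k) auto

lemma cr_le: "m \<le> M \<Longrightarrow> cr V E c M v = cr V' E' c' M v' \<Longrightarrow> cr V E c m v = cr V' E' c' m v'"
  using cr_peel[of V E c "M - m" m v V' E' c' v'] by simp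

lemma cr_base: "cr V E c M v = cr V' E' c' M v' \<Longrightarrow> c v = c' v'"
  using cr_le[of 0 M V E c v V' E' c' v'] by simp

lemma cr_deg: "1 \<le> M \<Longrightarrow> cr V E c M v = cr V' E' c' M v' \<Longrightarrow> card (nbrs V E v) = card (nbrs V' E' v')"
proof -
  assume a: "1 \<le> M" "cr V E c M v = cr V' E' c' M v'"
  have "cr V E c (Suc 0) v = cr V' E' c' (Suc 0) v'" by (rule cr_le[OF _ a(2)]) (use a(1) in simp)
  hence "size (image_mset (cr V E c 0) (mset_set (nbrs V E v))) = size (image_mset (cr V' E' c' 0) (mset_set (nbrs V' E' v')))"
    by (simp del: cr.simps(1))
  thus ?thesis by simp
qed

fun dg :: "'c crcol \<Rightarrow> nat" where
  "dg (Ref a M) = size M" | "dg (Base c) = 0"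

lemma dg_cr: "dg (cr V E c (Suc r) x) = card (nbrs V E x)" by simp

lemma cr_ndeg: "2 \<le> M \<Longrightarrow> cr V E c M v = cr V' E' c' M v' \<Longrightarrow>
   image_mset (\<lambda>u. card (nbrs V E u)) (mset_set (nbrs V E v)) = image_mset (\<lambda>u. card (nbrs V' E' u)) (mset_set (nbrs V' E' v'))"
proof -
  assume a: "2 \<le> M" "cr V E c M v = cr V' E' c' M v'"
  have "cr V E c (Suc (Suc 0)) v = cr V' E' c' (Suc (Suc 0)) v'" by (rule cr_le[OF _ a(2)]) (use a(1) in simp)
  hence "image_mset (cr V E c (Suc 0)) (mset_set (nbrs V E v)) = image_mset (cr V' E' c' (Suc 0)) (mset_set (nbrs V' E' v'))"
    by (simp only: cr.simps(2)) simp
  hence "image_mset dg (image_mset (cr V E c (Suc 0)) (mset_set (nbrs V E v))) = image_mset dg (image_mset (cr V' E' c' (Suc 0)) (mset_set (nbrs V' E' v')))"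
    by simp
  thus ?thesis by (simp add: image_mset.compositionality comp_def dg_cr del: cr.simps)
qed

lemma mset_transfer:
  assumes fin: "finite S1" "finite S2"
    and eq: "image_mset f1 (mset_set S1) = image_mset f2 (mset_set S2)"
    and c11: "\<forall>a\<in>S1. \<forall>b\<in>S1. f1 a = f1 b \<longrightarrow> g1 a = g1 b"
    and c12: "\<forall>a\<in>S1. \<forall>b\<in>S2. f1 a = f2 b \<longrightarrow> g1 a = g2 b"
    and c22: "\<forall>a\<in>S2. \<forall>b\<in>S2. f2 a = f2 b \<longrightarrow> g2 a = g2 b"
  shows "image_mset g1 (mset_set S1) = image_mset g2 (mset_set S2)"
proof -
  define \<Phi> where "\<Phi> c = (if \<exists>a\<in>S1. f1 a = c then g1 (SOME a. a \<in> S1 \<and> f1 a = c)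
                          else g2 (SOME b. b \<in> S2 \<and> f2 b = c))" for c
  have h1: "g1 a = \<Phi> (f1 a)" if a: "a \<in> S1" for a
  proof -
    define a0 where "a0 = (SOME a'. a' \<in> S1 \<and> f1 a' = f1 a)"
    have "a0 \<in> S1 \<and> f1 a0 = f1 a" unfolding a0_def
      by (rule someI[of _ a]) (simp add: a)
    hence "g1 a0 = g1 a" using c11 a by blast
    moreover have "\<Phi> (f1 a) = g1 a0" unfolding \<Phi>_def a0_def using a by auto
    ultimately show ?thesis by simp
  qed
  have h2: "g2 b = \<Phi> (f2 b)" if b: "b \<in> S2" for b
  proof (cases "\<exists>a\<in>S1. f1 a = f2 b")
    case True
    then obtain a where a: "a \<in> S1" "f1 a = f2 b" by blast
    define a0 where "a0 = (SOME a'. a' \<in> S1 \<and> f1 a' = f2 b)"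
    have "a0 \<in> S1 \<and> f1 a0 = f2 b" unfolding a0_def
      by (rule someI[of _ a]) (simp add: a)
    hence "g1 a0 = g2 b" using c12 b by blast
    moreover have "\<Phi> (f2 b) = g1 a0" unfolding \<Phi>_def a0_def using True by simp
    ultimately show ?thesis by simp
  next
    case False
    define b0 where "b0 = (SOME b'. b' \<in> S2 \<and> f2 b' = f2 b)"
    have "b0 \<in> S2 \<and> f2 b0 = f2 b" unfolding b0_def
      by (rule someI[of _ b]) (simp add: b)
    hence "g2 b0 = g2 b" using c22 b by blast
    moreover have "\<Phi> (f2 b) = g2 b0" unfolding \<Phi>_def b0_def using False by simp
    ultimately show ?thesis by simp
  qed
  have "image_mset g1 (mset_set S1) = image_mset (\<Phi> \<circ> f1) (mset_set S1)"
    by (rule image_mset_cong) (simp add: h1 fin)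
  also have "\<dots> = image_mset \<Phi> (image_mset f1 (mset_set S1))" by (simp add: image_mset.compositionality)
  also have "\<dots> = image_mset \<Phi> (image_mset f2 (mset_set S2))" using eq by simp
  also have "\<dots> = image_mset (\<Phi> \<circ> f2) (mset_set S2)" by (simp add: image_mset.compositionality)
  also have "\<dots> = image_mset g2 (mset_set S2)"
    by (rule image_mset_cong) (simp add: h2 fin)
  finally show ?thesis .
qed

lemma opt_extract:
  assumes "finite S"
  shows "image_mset the (filter_mset (\<lambda>ob. ob \<noteq> None) (image_mset (\<lambda>u. if u \<in> P then Some (h u) else None) (mset_set S)))
     = image_mset h (mset_set (S \<inter> P))"
proof -
  have "filter_mset (\<lambda>ob. ob \<noteq> None) (image_mset (\<lambda>u. if u \<in> P then Some (h u) else None) (mset_set S))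
     = image_mset (\<lambda>u. if u \<in> P then Some (h u) else None) (mset_set (S \<inter> P))"
  proof -
    have "{x \<in> S. (if x \<in> P then Some (h x) else None) \<noteq> None} = S \<inter> P" by auto
    thus ?thesis using assms by (simp only: filter_mset_image_mset filter_mset_mset_set)
  qed
  also have "image_mset the \<dots> = image_mset h (mset_set (S \<inter> P))"
    by (simp add: image_mset.compositionality) (rule image_mset_cong, use assms in auto)
  finally show ?thesis by simp
qed

lemma cr_embed:
  assumes "inj f" "\<forall>v\<in>V. nbrs V' E' (f v) = f ` nbrs V E v" "\<forall>v\<in>V. c' (f v) = c v" "finite V"
  shows "v \<in> V \<Longrightarrow> cr V' E' c' r (f v) = cr V E c r v"
proof (induction r arbitrary: v)
  case 0 thus ?case using assms by simp
next
  case (Suc r)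
  have fin: "finite (nbrs V E v)" using assms(4) unfolding nbrs_def by simp
  have "image_mset (cr V' E' c' r) (mset_set (nbrs V' E' (f v))) = image_mset (cr V' E' c' r) (image_mset f (mset_set (nbrs V E v)))"
    using assms(1,2) Suc.prems by (simp add: image_mset_mset_set inj_on_def inj_def)
  also have "\<dots> = image_mset (cr V E c r) (mset_set (nbrs V E v))"
    by (simp add: image_mset.compositionality) (rule image_mset_cong, use fin Suc.IH in \<open>auto simp: nbrs_def\<close>)
  finally show ?case using Suc by simp
qed



definition cfg :: "nat \<Rightarrow> 'a set \<Rightarrow> ('a \<Rightarrow> 'a \<Rightarrow> bool) \<Rightarrow> 'a \<Rightarrow> 'a set \<Rightarrow> ('a \<Rightarrow> 'a \<Rightarrow> bool) \<Rightarrow> 'a \<Rightarrow> 'a gv \<Rightarrow> bool" where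
  "cfg d V1 E1 p1 V2 E2 p2 z \<longleftrightarrow> simple_graph V1 E1 \<and> simple_graph V2 E2
     \<and> (\<forall>v\<in>V1. card (nbrs V1 E1 v) = d) \<and> (\<forall>v\<in>V2. card (nbrs V2 E2 v) = d)
     \<and> p1 \<in> V1 \<and> p2 \<in> V2 \<and> z \<in> L ` V1 \<union> R ` V2"

definition partV :: "'a set \<Rightarrow> 'a set \<Rightarrow> 'a gv set" where
  "partV V1 V2 = L ` V1 \<union> R ` V2"

definition pcol :: "'a \<Rightarrow> 'a \<Rightarrow> 'a gv \<Rightarrow> 'a gv \<Rightarrow> clr" where
  "pcol p1 p2 z v = (if v = z then Special else if v = L p1 \<or> v = R p2 then Port else Default)"

lemma sg_sym: "simple_graph V E \<Longrightarrow> E a b \<Longrightarrow> E b a" unfolding simple_graph_def by blast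
lemma sg_in: "simple_graph V E \<Longrightarrow> E a b \<Longrightarrow> a \<in> V \<and> b \<in> V" unfolding simple_graph_def by blast
lemma sg_fin: "simple_graph V E \<Longrightarrow> finite V" unfolding simple_graph_def by blast
lemma nbrs_sub: "nbrs V E a \<subseteq> V" unfolding nbrs_def by auto
lemma nbrs_fin: "simple_graph V E \<Longrightarrow> finite (nbrs V E a)" unfolding nbrs_def simple_graph_def by simp

lemma gE_LL: "simple_graph V1 E1 \<Longrightarrow> gadgetE E1 p1 E2 p2 (L a) (L b) = E1 a b"
  unfolding gadgetE_def using sg_sym by fastforce
lemma gE_RR: "simple_graph V2 E2 \<Longrightarrow> gadgetE E1 p1 E2 p2 (R a) (R b) = E2 a b"
  unfolding gadgetE_def using sg_sym by fastforce
lemma gE_other[simp]: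
  "gadgetE E1 p1 E2 p2 (L a) (R b) = False" "gadgetE E1 p1 E2 p2 (R a) (L b) = False"
  "gadgetE E1 p1 E2 p2 (L a) Conn = (a = p1)" "gadgetE E1 p1 E2 p2 Conn (L a) = (a = p1)"
  "gadgetE E1 p1 E2 p2 (R a) Conn = (a = p2)" "gadgetE E1 p1 E2 p2 Conn (R a) = (a = p2)"
  "gadgetE E1 p1 E2 p2 (L a) Pend = False" "gadgetE E1 p1 E2 p2 Pend (L a) = False"
  "gadgetE E1 p1 E2 p2 (R a) Pend = False" "gadgetE E1 p1 E2 p2 Pend (R a) = False"
  "gadgetE E1 p1 E2 p2 Conn Pend = True" "gadgetE E1 p1 E2 p2 Pend Conn = True"
  "gadgetE E1 p1 E2 p2 Conn Conn = False" "gadgetE E1 p1 E2 p2 Pend Pend = False"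
  unfolding gadgetE_def by auto

lemma partV_sub: "partV V1 V2 \<subseteq> gadgetV V1 V2" unfolding partV_def gadgetV_def by auto
lemma Conn_notin[simp]: "Conn \<notin> partV V1 V2" "Pend \<notin> partV V1 V2" unfolding partV_def by auto
lemma gadgetV_eq: "gadgetV V1 V2 = partV V1 V2 \<union> {Conn, Pend}" unfolding partV_def gadgetV_def by auto

lemma cfgD: assumes "cfg d V1 E1 p1 V2 E2 p2 z"
  shows "simple_graph V1 E1" "simple_graph V2 E2" "\<And>v. v\<in>V1 \<Longrightarrow> card (nbrs V1 E1 v) = d"
    "\<And>v. v\<in>V2 \<Longrightarrow> card (nbrs V2 E2 v) = d" "p1 \<in> V1" "p2 \<in> V2" "z \<in> partV V1 V2"
  using assms unfolding cfg_def partV_def by auto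

lemma nbrs_L: assumes "cfg d V1 E1 p1 V2 E2 p2 z"
  shows "nbrs (gadgetV V1 V2) (gadgetE E1 p1 E2 p2) (L a) = L ` nbrs V1 E1 a \<union> (if a = p1 then {Conn} else {})"
proof -
  note c = cfgD[OF assms]
  show ?thesis
    unfolding nbrs_def gadgetV_def
    apply (rule set_eqI)
    subgoal for y by (cases y) (use c sg_in[OF c(1)] in \<open>auto simp: gE_LL[OF c(1)]\<close>)
    done
qed

lemma nbrs_R: assumes "cfg d V1 E1 p1 V2 E2 p2 z"
  shows "nbrs (gadgetV V1 V2) (gadgetE E1 p1 E2 p2) (R a) = R ` nbrs V2 E2 a \<union> (if a = p2 then {Conn} else {})"
proof -
  note c = cfgD[OF assms]
  show ?thesis
    unfolding nbrs_def gadgetV_def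
    apply (rule set_eqI)
    subgoal for y by (cases y) (use c sg_in[OF c(2)] in \<open>auto simp: gE_RR[OF c(2)]\<close>)
    done
qed

lemma nbrsP_L: assumes "cfg d V1 E1 p1 V2 E2 p2 z"
  shows "nbrs (partV V1 V2) (gadgetE E1 p1 E2 p2) (L a) = L ` nbrs V1 E1 a"
proof -
  note c = cfgD[OF assms]
  show ?thesis
    unfolding nbrs_def partV_def
    apply (rule set_eqI)
    subgoal for y by (cases y) (use c sg_in[OF c(1)] in \<open>auto simp: gE_LL[OF c(1)]\<close>)
    done
qed

lemma nbrsP_R: assumes "cfg d V1 E1 p1 V2 E2 p2 z"
  shows "nbrs (partV V1 V2) (gadgetE E1 p1 E2 p2) (R a) = R ` nbrs V2 E2 a"
proof -
  note c = cfgD[OF assms]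
  show ?thesis
    unfolding nbrs_def partV_def
    apply (rule set_eqI)
    subgoal for y by (cases y) (use c sg_in[OF c(2)] in \<open>auto simp: gE_RR[OF c(2)]\<close>)
    done
qed

lemma nbrs_Conn: assumes "cfg d V1 E1 p1 V2 E2 p2 z"
  shows "nbrs (gadgetV V1 V2) (gadgetE E1 p1 E2 p2) Conn = {L p1, R p2, Pend}"
proof -
  note c = cfgD[OF assms]
  show ?thesis
    unfolding nbrs_def gadgetV_def
    apply (rule set_eqI)
    subgoal for y by (cases y) (use c in auto)
    done
qed

lemma nbrs_Pend: "nbrs (gadgetV V1 V2) (gadgetE E1 p1 E2 p2) Pend = {Conn}"
  unfolding nbrs_def gadgetV_def
  apply (rule set_eqI)
  subgoal for y by (cases y) auto
  done

lemma card_Conn: "cfg d V1 E1 p1 V2 E2 p2 z \<Longrightarrow> card (nbrs (gadgetV V1 V2) (gadgetE E1 p1 E2 p2) Conn) = 3"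
  by (simp add: nbrs_Conn)
lemma card_Pend: "card (nbrs (gadgetV V1 V2) (gadgetE E1 p1 E2 p2) Pend) = 1"
  by (simp add: nbrs_Pend)

definition isport :: "'a \<Rightarrow> 'a \<Rightarrow> 'a gv \<Rightarrow> bool" where
  "isport p1 p2 v \<longleftrightarrow> v = L p1 \<or> v = R p2"

lemma card_part: assumes "cfg d V1 E1 p1 V2 E2 p2 z" "v \<in> partV V1 V2"
  shows "card (nbrs (gadgetV V1 V2) (gadgetE E1 p1 E2 p2) v) = (if isport p1 p2 v then Suc d else d)"
proof -
  note c = cfgD[OF assms(1)]
  from assms(2) consider a where "v = L a" "a \<in> V1" | a where "v = R a" "a \<in> V2" unfolding partV_def by auto
  thus ?thesis
  proof cases
    case 1
    have fin: "finite (L ` nbrs V1 E1 a)" using nbrs_fin[OF c(1)] by simp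
    have "card (L ` nbrs V1 E1 a) = d" using c(3)[OF 1(2)] by (simp add: card_image inj_on_def)
    thus ?thesis using 1 fin by (auto simp: nbrs_L[OF assms(1)] isport_def card_insert_if)
  next
    case 2
    have fin: "finite (R ` nbrs V2 E2 a)" using nbrs_fin[OF c(2)] by simp
    have "card (R ` nbrs V2 E2 a) = d" using c(4)[OF 2(2)] by (simp add: card_image inj_on_def)
    thus ?thesis using 2 fin by (auto simp: nbrs_R[OF assms(1)] isport_def card_insert_if)
  qed
qed

lemma nbr_part: assumes "cfg d V1 E1 p1 V2 E2 p2 z" "v \<in> partV V1 V2"
    "u \<in> nbrs (gadgetV V1 V2) (gadgetE E1 p1 E2 p2) v"
  shows "u \<in> partV V1 V2 \<or> (u = Conn \<and> isport p1 p2 v)"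
proof -
  note c = cfgD[OF assms(1)]
  from assms(2) consider a where "v = L a" "a \<in> V1" | a where "v = R a" "a \<in> V2" unfolding partV_def by auto
  thus ?thesis
  proof cases
    case 1 thus ?thesis using assms(3) by (auto simp: nbrs_L[OF assms(1)] partV_def isport_def split: if_splits dest: subsetD[OF nbrs_sub])
  next
    case 2 thus ?thesis using assms(3) by (auto simp: nbrs_R[OF assms(1)] partV_def isport_def split: if_splits dest: subsetD[OF nbrs_sub])
  qed
qed

lemma fin_g: assumes "cfg d V1 E1 p1 V2 E2 p2 z" shows "finite (gadgetV V1 V2)"
  using sg_fin[OF cfgD(1)[OF assms]] sg_fin[OF cfgD(2)[OF assms]] unfolding gadgetV_def by blast
lemma fin_nb: "cfg d V1 E1 p1 V2 E2 p2 z \<Longrightarrow> finite (nbrs (gadgetV V1 V2) (gadgetE E1 p1 E2 p2) v)"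
  using fin_g[of d V1 E1 p1 V2 E2 p2 z] unfolding nbrs_def by auto
lemma fin_p: assumes "cfg d V1 E1 p1 V2 E2 p2 z" shows "finite (partV V1 V2)"
  by (rule finite_subset[OF partV_sub fin_g[OF assms]])



abbreviation GC where "GC V1 E1 p1 V2 E2 p2 z m v \<equiv> cr (gadgetV V1 V2) (gadgetE E1 p1 E2 p2) (indiv z) m v"
abbreviation PC where "PC V1 E1 p1 V2 E2 p2 z r v \<equiv> cr (partV V1 V2) (gadgetE E1 p1 E2 p2) (pcol p1 p2 z) r v"

lemma in_img_mset: "finite S \<Longrightarrow> (c \<in># image_mset f (mset_set S)) = (\<exists>u\<in>S. c = f u)"
  by auto

lemma conn_sep: assumes c1: "cfg d V1 E1 p1 V2 E2 p2 z" and c2: "cfg d W1 F1 q1 W2 F2 q2 z'"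
  and v: "v \<in> partV W1 W2" and m: "2 \<le> m"
  shows "GC V1 E1 p1 V2 E2 p2 z m Conn \<noteq> GC W1 F1 q1 W2 F2 q2 z' m v"
proof
  assume eq: "GC V1 E1 p1 V2 E2 p2 z m Conn = GC W1 F1 q1 W2 F2 q2 z' m v"
  have "card (nbrs (gadgetV W1 W2) (gadgetE F1 q1 F2 q2) v) = 3"
    using cr_deg[OF _ eq] m card_Conn[OF c1] by simp
  hence d: "d = 2 \<or> d = 3" using card_part[OF c2 v] by (auto split: if_splits)
  have nd: "image_mset (\<lambda>u. card (nbrs (gadgetV V1 V2) (gadgetE E1 p1 E2 p2) u)) (mset_set (nbrs (gadgetV V1 V2) (gadgetE E1 p1 E2 p2) Conn))
     = image_mset (\<lambda>u. card (nbrs (gadgetV W1 W2) (gadgetE F1 q1 F2 q2) u)) (mset_set (nbrs (gadgetV W1 W2) (gadgetE F1 q1 F2 q2) v))"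
    using cr_ndeg[OF m eq] .
  have "1 \<in># image_mset (\<lambda>u. card (nbrs (gadgetV V1 V2) (gadgetE E1 p1 E2 p2) u)) (mset_set (nbrs (gadgetV V1 V2) (gadgetE E1 p1 E2 p2) Conn))"
    unfolding in_img_mset[OF fin_nb[OF c1]] using card_Pend[of V1 V2 E1 p1 E2 p2] nbrs_Conn[OF c1] by (metis insertCI)
  hence "1 \<in># image_mset (\<lambda>u. card (nbrs (gadgetV W1 W2) (gadgetE F1 q1 F2 q2) u)) (mset_set (nbrs (gadgetV W1 W2) (gadgetE F1 q1 F2 q2) v))"
    using nd by simp
  then obtain u where u: "u \<in> nbrs (gadgetV W1 W2) (gadgetE F1 q1 F2 q2) v" "card (nbrs (gadgetV W1 W2) (gadgetE F1 q1 F2 q2) u) = 1"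
    unfolding in_img_mset[OF fin_nb[OF c2]] by auto
  from nbr_part[OF c2 v u(1)] show False
  proof
    assume "u \<in> partV W1 W2" thus False using card_part[OF c2, of u] u(2) d by (auto split: if_splits)
  next
    assume "u = Conn \<and> isport q1 q2 v" thus False using card_Conn[OF c2] u(2) by simp
  qed
qed

lemma pend_lem: assumes c1: "cfg d V1 E1 p1 V2 E2 p2 z" and c2: "cfg d W1 F1 q1 W2 F2 q2 z'"
  and v: "v \<in> partV W1 W2" and m: "2 \<le> m"
  and eq: "GC V1 E1 p1 V2 E2 p2 z m Pend = GC W1 F1 q1 W2 F2 q2 z' m v"
  shows "d = 0 \<and> isport q1 q2 v \<and> v \<noteq> z'"
proof -
  have "indiv z Pend = indiv z' v" using cr_base[OF eq] .
  moreover have "z \<noteq> Pend" using cfgD(7)[OF c1] by auto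
  ultimately have nz: "v \<noteq> z'" by (auto simp: indiv_def split: if_splits)
  have dg1: "card (nbrs (gadgetV W1 W2) (gadgetE F1 q1 F2 q2) v) = 1"
    using cr_deg[OF _ eq] m card_Pend[of V1 V2 E1 p1 E2 p2] by simp
  have nd: "image_mset (\<lambda>u. card (nbrs (gadgetV V1 V2) (gadgetE E1 p1 E2 p2) u)) (mset_set (nbrs (gadgetV V1 V2) (gadgetE E1 p1 E2 p2) Pend))
     = image_mset (\<lambda>u. card (nbrs (gadgetV W1 W2) (gadgetE F1 q1 F2 q2) u)) (mset_set (nbrs (gadgetV W1 W2) (gadgetE F1 q1 F2 q2) v))"
    using cr_ndeg[OF m eq] .
  have "3 \<in># image_mset (\<lambda>u. card (nbrs (gadgetV V1 V2) (gadgetE E1 p1 E2 p2) u)) (mset_set (nbrs (gadgetV V1 V2) (gadgetE E1 p1 E2 p2) Pend))"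
    using card_Conn[OF c1] by (simp add: nbrs_Pend)
  hence "3 \<in># image_mset (\<lambda>u. card (nbrs (gadgetV W1 W2) (gadgetE F1 q1 F2 q2) u)) (mset_set (nbrs (gadgetV W1 W2) (gadgetE F1 q1 F2 q2) v))"
    using nd by simp
  then obtain u where u: "u \<in> nbrs (gadgetV W1 W2) (gadgetE F1 q1 F2 q2) v" "card (nbrs (gadgetV W1 W2) (gadgetE F1 q1 F2 q2) u) = 3"
    unfolding in_img_mset[OF fin_nb[OF c2]] by auto
  have ip: "isport q1 q2 v"
  proof (rule ccontr)
    assume np: "\<not> isport q1 q2 v"
    hence "d = 1" using card_part[OF c2 v] dg1 by simp
    from nbr_part[OF c2 v u(1)] np have "u \<in> partV W1 W2" by auto
    thus False using card_part[OF c2, of u] u(2) \<open>d = 1\<close> by (auto split: if_splits)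
  qed
  hence "d = 0" using card_part[OF c2 v] dg1 by simp
  thus ?thesis using ip nz by simp
qed

fun Kc :: "nat \<Rightarrow> clr crcol" where
  "Kc 0 = Base Port" | "Kc (Suc r) = Ref (Kc r) {#}"

lemma kc_lem: assumes c: "cfg 0 V1 E1 p1 V2 E2 p2 z" and ip: "isport p1 p2 v" and nz: "v \<noteq> z"
  shows "PC V1 E1 p1 V2 E2 p2 z r v = Kc r"
proof -
  note cd = cfgD[OF c]
  have e: "nbrs (partV V1 V2) (gadgetE E1 p1 E2 p2) v = {}"
  proof -
    have "nbrs V1 E1 p1 = {}" using cd(3)[OF cd(5)] nbrs_fin[OF cd(1)] by simp
    moreover have "nbrs V2 E2 p2 = {}" using cd(4)[OF cd(6)] nbrs_fin[OF cd(2)] by simp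
    ultimately show ?thesis using ip by (auto simp: isport_def nbrsP_L[OF c] nbrsP_R[OF c])
  qed
  have pc: "pcol p1 p2 z v = Port" using ip nz by (auto simp: pcol_def isport_def)
  show ?thesis by (induction r) (simp_all add: e pc)
qed



lemma nbrs_int: "P \<subseteq> G \<Longrightarrow> nbrs G E v \<inter> P = nbrs P E v" by (auto simp: nbrs_def)

lemma pair_cons:
  assumes c1: "cfg d V1 E1 p1 V2 E2 p2 z" and c2: "cfg d W1 F1 q1 W2 F2 q2 z'"
  and IH: "\<forall>v v' m. v \<in> partV V1 V2 \<longrightarrow> v' \<in> partV W1 W2 \<longrightarrow> r + 2 \<le> m \<longrightarrow>
      GC V1 E1 p1 V2 E2 p2 z m v = GC W1 F1 q1 W2 F2 q2 z' m v' \<longrightarrow>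
      PC V1 E1 p1 V2 E2 p2 z r v = PC W1 F1 q1 W2 F2 q2 z' r v'"
  and s: "s \<in> partV V1 V2" "u \<in> nbrs (gadgetV V1 V2) (gadgetE E1 p1 E2 p2) s"
  and s': "s' \<in> partV W1 W2" "u' \<in> nbrs (gadgetV W1 W2) (gadgetE F1 q1 F2 q2) s'"
  and m: "r + 2 \<le> m" and eq: "GC V1 E1 p1 V2 E2 p2 z m u = GC W1 F1 q1 W2 F2 q2 z' m u'"
  shows "(if u \<in> partV V1 V2 then Some (PC V1 E1 p1 V2 E2 p2 z r u) else None)
       = (if u' \<in> partV W1 W2 then Some (PC W1 F1 q1 W2 F2 q2 z' r u') else None)"
proof -
  have m2: "2 \<le> m" using m by simp
  from nbr_part[OF c1 s] nbr_part[OF c2 s'] show ?thesis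
  proof (elim disjE conjE)
    assume "u \<in> partV V1 V2" "u' \<in> partV W1 W2" thus ?thesis using IH m eq by simp
  next
    assume "u \<in> partV V1 V2" "u' = Conn" thus ?thesis using conn_sep[OF c2 c1 _ m2, of u] eq by simp
  next
    assume "u = Conn" "u' \<in> partV W1 W2" thus ?thesis using conn_sep[OF c1 c2 _ m2, of u'] eq by simp
  next
    assume "u = Conn" "u' = Conn" thus ?thesis by simp
  qed
qed

lemma sim: "cfg d (V1::'a set) E1 p1 V2 E2 p2 z \<Longrightarrow> cfg d (W1::'a set) F1 q1 W2 F2 q2 z' \<Longrightarrow>
   v \<in> partV V1 V2 \<Longrightarrow> v' \<in> partV W1 W2 \<Longrightarrow> r + 2 \<le> m \<Longrightarrow>
   GC V1 E1 p1 V2 E2 p2 z m v = GC W1 F1 q1 W2 F2 q2 z' m v' \<Longrightarrow>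
   PC V1 E1 p1 V2 E2 p2 z r v = PC W1 F1 q1 W2 F2 q2 z' r v'"
proof (induction r arbitrary: V1 E1 p1 V2 E2 p2 z W1 F1 q1 W2 F2 q2 z' v v' m)
  case 0
  have b: "indiv z v = indiv z' v'" using cr_base[OF "0.prems"(6)] .
  have "card (nbrs (gadgetV V1 V2) (gadgetE E1 p1 E2 p2) v) = card (nbrs (gadgetV W1 W2) (gadgetE F1 q1 F2 q2) v')"
    using cr_deg[OF _ "0.prems"(6)] "0.prems"(5) by simp
  hence "isport p1 p2 v = isport q1 q2 v'"
    using card_part[OF "0.prems"(1,3)] card_part[OF "0.prems"(2,4)] by (auto split: if_splits)
  thus ?case using b by (auto simp: pcol_def indiv_def isport_def split: if_splits)
next
  case (Suc r)
  note c1 = Suc.prems(1) and c2 = Suc.prems(2)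
  obtain m' where mm: "m = Suc m'" "r + 2 \<le> m'" using Suc.prems(5) by (cases m) auto
  have eq: "GC V1 E1 p1 V2 E2 p2 z (Suc m') v = GC W1 F1 q1 W2 F2 q2 z' (Suc m') v'" using Suc.prems(6) mm by simp
  have first: "PC V1 E1 p1 V2 E2 p2 z r v = PC W1 F1 q1 W2 F2 q2 z' r v'"
    using Suc.IH[OF c1 c2 Suc.prems(3,4) _ Suc.prems(6)] Suc.prems(5) by simp
  have IH11: "\<forall>v v' m. v \<in> partV V1 V2 \<longrightarrow> v' \<in> partV V1 V2 \<longrightarrow> r + 2 \<le> m \<longrightarrow>
      GC V1 E1 p1 V2 E2 p2 z m v = GC V1 E1 p1 V2 E2 p2 z m v' \<longrightarrow>
      PC V1 E1 p1 V2 E2 p2 z r v = PC V1 E1 p1 V2 E2 p2 z r v'" using Suc.IH[OF c1 c1] by blast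
  have IH12: "\<forall>v v' m. v \<in> partV V1 V2 \<longrightarrow> v' \<in> partV W1 W2 \<longrightarrow> r + 2 \<le> m \<longrightarrow>
      GC V1 E1 p1 V2 E2 p2 z m v = GC W1 F1 q1 W2 F2 q2 z' m v' \<longrightarrow>
      PC V1 E1 p1 V2 E2 p2 z r v = PC W1 F1 q1 W2 F2 q2 z' r v'" using Suc.IH[OF c1 c2] by blast
  have IH22: "\<forall>v v' m. v \<in> partV W1 W2 \<longrightarrow> v' \<in> partV W1 W2 \<longrightarrow> r + 2 \<le> m \<longrightarrow>
      GC W1 F1 q1 W2 F2 q2 z' m v = GC W1 F1 q1 W2 F2 q2 z' m v' \<longrightarrow>
      PC W1 F1 q1 W2 F2 q2 z' r v = PC W1 F1 q1 W2 F2 q2 z' r v'" using Suc.IH[OF c2 c2] by blast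
  let ?S1 = "nbrs (gadgetV V1 V2) (gadgetE E1 p1 E2 p2) v"
  let ?S2 = "nbrs (gadgetV W1 W2) (gadgetE F1 q1 F2 q2) v'"
  let ?g1 = "\<lambda>u. if u \<in> partV V1 V2 then Some (PC V1 E1 p1 V2 E2 p2 z r u) else None"
  let ?g2 = "\<lambda>u. if u \<in> partV W1 W2 then Some (PC W1 F1 q1 W2 F2 q2 z' r u) else None"
  have neq: "image_mset (GC V1 E1 p1 V2 E2 p2 z m') (mset_set ?S1) = image_mset (GC W1 F1 q1 W2 F2 q2 z' m') (mset_set ?S2)"
    using eq by simp
  have "image_mset ?g1 (mset_set ?S1) = image_mset ?g2 (mset_set ?S2)"
  proof (rule mset_transfer[OF fin_nb[OF c1] fin_nb[OF c2] neq])
    show "\<forall>a\<in>?S1. \<forall>b\<in>?S1. GC V1 E1 p1 V2 E2 p2 z m' a = GC V1 E1 p1 V2 E2 p2 z m' b \<longrightarrow> ?g1 a = ?g1 b"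
      using pair_cons[OF c1 c1 IH11 Suc.prems(3) _ Suc.prems(3) _ mm(2)] by blast
    show "\<forall>a\<in>?S1. \<forall>b\<in>?S2. GC V1 E1 p1 V2 E2 p2 z m' a = GC W1 F1 q1 W2 F2 q2 z' m' b \<longrightarrow> ?g1 a = ?g2 b"
      using pair_cons[OF c1 c2 IH12 Suc.prems(3) _ Suc.prems(4) _ mm(2)] by blast
    show "\<forall>a\<in>?S2. \<forall>b\<in>?S2. GC W1 F1 q1 W2 F2 q2 z' m' a = GC W1 F1 q1 W2 F2 q2 z' m' b \<longrightarrow> ?g2 a = ?g2 b"
      using pair_cons[OF c2 c2 IH22 Suc.prems(4) _ Suc.prems(4) _ mm(2)] by blast
  qed
  hence "image_mset the (filter_mset (\<lambda>ob. ob \<noteq> None) (image_mset ?g1 (mset_set ?S1)))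
       = image_mset the (filter_mset (\<lambda>ob. ob \<noteq> None) (image_mset ?g2 (mset_set ?S2)))" by simp
  hence "image_mset (PC V1 E1 p1 V2 E2 p2 z r) (mset_set (?S1 \<inter> partV V1 V2))
       = image_mset (PC W1 F1 q1 W2 F2 q2 z' r) (mset_set (?S2 \<inter> partV W1 W2))"
    by (simp only: opt_extract[OF fin_nb[OF c1]] opt_extract[OF fin_nb[OF c2]])
  hence "image_mset (PC V1 E1 p1 V2 E2 p2 z r) (mset_set (nbrs (partV V1 V2) (gadgetE E1 p1 E2 p2) v))
       = image_mset (PC W1 F1 q1 W2 F2 q2 z' r) (mset_set (nbrs (partV W1 W2) (gadgetE F1 q1 F2 q2) v'))"
    by (simp only: nbrs_int[OF partV_sub])
  thus ?case using first by simp
qed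



definition portcol :: "'a \<Rightarrow> 'a \<Rightarrow> clr" where
  "portcol p v = (if v = p then Port else Default)"

fun gcol :: "nat \<Rightarrow> nat \<Rightarrow> nat \<Rightarrow> nat \<Rightarrow> nat \<Rightarrow> clr crcol" where
  "gcol d lam mu 0 t = Base (if t = 0 then Port else Default)"
| "gcol d lam mu (Suc r) t = Ref (gcol d lam mu r t)
     (if t = 0 then replicate_mset d (gcol d lam mu r 1)
      else if t = 1 then {#gcol d lam mu r 0#} + replicate_mset lam (gcol d lam mu r 1) + replicate_mset (d - 1 - lam) (gcol d lam mu r 2)
      else replicate_mset mu (gcol d lam mu r 1) + replicate_mset (d - mu) (gcol d lam mu r 2))"

definition vtyp :: "'a \<Rightarrow> ('a \<Rightarrow> 'a \<Rightarrow> bool) \<Rightarrow> 'a \<Rightarrow> nat" where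
  "vtyp p E v = (if v = p then 0 else if E p v then 1 else 2)"

lemma img_const: "finite S \<Longrightarrow> \<forall>x\<in>S. h x = c \<Longrightarrow> image_mset h (mset_set S) = replicate_mset (card S) c"
proof -
  assume a: "finite S" "\<forall>x\<in>S. h x = c"
  have "image_mset h (mset_set S) = image_mset (\<lambda>_. c) (mset_set S)"
    by (rule image_mset_cong) (use a in auto)
  thus ?thesis by (simp add: image_mset_const_eq)
qed

lemma img_split:
  assumes fin: "finite N" and h: "\<forall>x\<in>N. h x = (if x = p then c0 else if E p x then c1 else c2)"
  shows "image_mset h (mset_set N) = replicate_mset (card (N \<inter> {p})) c0
     + replicate_mset (card (N \<inter> {x. x \<noteq> p \<and> E p x})) c1 + replicate_mset (card (N \<inter> {x. x \<noteq> p \<and> \<not> E p x})) c2"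
proof -
  have N: "N = (N \<inter> {p}) \<union> (N \<inter> {x. x \<noteq> p \<and> E p x}) \<union> (N \<inter> {x. x \<noteq> p \<and> \<not> E p x})" by auto
  have "mset_set N = mset_set (N \<inter> {p}) + mset_set (N \<inter> {x. x \<noteq> p \<and> E p x}) + mset_set (N \<inter> {x. x \<noteq> p \<and> \<not> E p x})"
    apply (subst N)
    apply (subst mset_set_Union)
    using fin apply auto[3]
    apply (subst mset_set_Union)
    using fin apply auto
    done
  hence "image_mset h (mset_set N) = image_mset h (mset_set (N \<inter> {p})) + image_mset h (mset_set (N \<inter> {x. x \<noteq> p \<and> E p x}))
      + image_mset h (mset_set (N \<inter> {x. x \<noteq> p \<and> \<not> E p x}))" by simp
  also have "\<dots> = replicate_mset (card (N \<inter> {p})) c0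
     + replicate_mset (card (N \<inter> {x. x \<noteq> p \<and> E p x})) c1 + replicate_mset (card (N \<inter> {x. x \<noteq> p \<and> \<not> E p x})) c2"
  proof -
    have "image_mset h (mset_set (N \<inter> {p})) = replicate_mset (card (N \<inter> {p})) c0"
      by (rule img_const) (use fin h in auto)
    moreover have "image_mset h (mset_set (N \<inter> {x. x \<noteq> p \<and> E p x})) = replicate_mset (card (N \<inter> {x. x \<noteq> p \<and> E p x})) c1"
      by (rule img_const) (use fin h in auto)
    moreover have "image_mset h (mset_set (N \<inter> {x. x \<noteq> p \<and> \<not> E p x})) = replicate_mset (card (N \<inter> {x. x \<noteq> p \<and> \<not> E p x})) c2"
      by (rule img_const) (use fin h in auto)
    ultimately show ?thesis by simp
  qed
  finally show ?thesis .
qed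

lemma srg_cr:
  assumes srg: "strongly_regular V E n d lam mu" and p: "p \<in> V"
  shows "v \<in> V \<Longrightarrow> cr V E (portcol p) r v = gcol d lam mu r (vtyp p E v)"
proof (induction r arbitrary: v)
  case 0 thus ?case by (simp add: portcol_def vtyp_def)
next
  case (Suc r)
  have sg: "simple_graph V E" and deg: "\<And>v. v \<in> V \<Longrightarrow> card (nbrs V E v) = d"
    and lm: "\<And>u v. u\<in>V \<Longrightarrow> v\<in>V \<Longrightarrow> E u v \<Longrightarrow> card (nbrs V E u \<inter> nbrs V E v) = lam"
    and mu: "\<And>u v. u\<in>V \<Longrightarrow> v\<in>V \<Longrightarrow> u \<noteq> v \<Longrightarrow> \<not> E u v \<Longrightarrow> card (nbrs V E u \<inter> nbrs V E v) = mu"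
    using srg unfolding strongly_regular_def by auto
  have irr: "\<not> E a a" for a using sg unfolding simple_graph_def by auto
  let ?N = "nbrs V E v"
  have fin: "finite ?N" using nbrs_fin[OF sg] .
  have "image_mset (cr V E (portcol p) r) (mset_set ?N) = image_mset (\<lambda>x. gcol d lam mu r (vtyp p E x)) (mset_set ?N)"
    by (rule image_mset_cong) (use fin Suc.IH in \<open>auto simp: nbrs_def\<close>)
  also have "\<dots> = replicate_mset (card (?N \<inter> {p})) (gcol d lam mu r 0)
     + replicate_mset (card (?N \<inter> {x. x \<noteq> p \<and> E p x})) (gcol d lam mu r 1) + replicate_mset (card (?N \<inter> {x. x \<noteq> p \<and> \<not> E p x})) (gcol d lam mu r 2)"
    by (rule img_split[OF fin]) (auto simp: vtyp_def)
  also have "\<dots> = (if vtyp p E v = 0 then replicate_mset d (gcol d lam mu r 1)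
      else if vtyp p E v = 1 then {#gcol d lam mu r 0#} + replicate_mset lam (gcol d lam mu r 1) + replicate_mset (d - 1 - lam) (gcol d lam mu r 2)
      else replicate_mset mu (gcol d lam mu r 1) + replicate_mset (d - mu) (gcol d lam mu r 2))"
  proof -
    have A: "?N \<inter> {x. x \<noteq> p \<and> E p x} = ?N \<inter> nbrs V E p" using irr by (auto simp: nbrs_def)
    have B: "card (?N \<inter> {x. x \<noteq> p \<and> \<not> E p x}) = card ?N - card (?N \<inter> {p}) - card (?N \<inter> nbrs V E p)"
    proof -
      have "?N = (?N \<inter> {x. x \<noteq> p \<and> \<not> E p x}) \<union> (?N \<inter> {p}) \<union> (?N \<inter> nbrs V E p)"
        by (auto simp: nbrs_def)
      moreover have "card ((?N \<inter> {x. x \<noteq> p \<and> \<not> E p x}) \<union> (?N \<inter> {p}) \<union> (?N \<inter> nbrs V E p))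
          = card (?N \<inter> {x. x \<noteq> p \<and> \<not> E p x}) + card (?N \<inter> {p}) + card (?N \<inter> nbrs V E p)"
      proof -
        have "card ((?N \<inter> {x. x \<noteq> p \<and> \<not> E p x}) \<union> (?N \<inter> {p}) \<union> (?N \<inter> nbrs V E p))
          = card ((?N \<inter> {x. x \<noteq> p \<and> \<not> E p x}) \<union> (?N \<inter> {p})) + card (?N \<inter> nbrs V E p)"
          by (rule card_Un_disjoint) (use fin irr in \<open>auto simp: nbrs_def\<close>)
        moreover have "card ((?N \<inter> {x. x \<noteq> p \<and> \<not> E p x}) \<union> (?N \<inter> {p}))
          = card (?N \<inter> {x. x \<noteq> p \<and> \<not> E p x}) + card (?N \<inter> {p})"
          by (rule card_Un_disjoint) (use fin in auto)
        ultimately show ?thesis by simp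
      qed
      ultimately have "card ?N = card (?N \<inter> {x. x \<noteq> p \<and> \<not> E p x}) + card (?N \<inter> {p}) + card (?N \<inter> nbrs V E p)"
        by simp
      thus ?thesis by simp
    qed
    show ?thesis
    proof (cases "v = p")
      case True
      have "?N \<inter> {p} = {}" using True irr by (auto simp: nbrs_def)
      moreover have "?N \<inter> nbrs V E p = ?N" using True by auto
      ultimately show ?thesis using True deg[OF Suc.prems] A B by (simp add: vtyp_def)
    next
      case False
      note vp = False
      show ?thesis
      proof (cases "E p v")
        case True
        have "?N \<inter> {p} = {p}" using True p sg_sym[OF sg True] by (auto simp: nbrs_def)
        moreover have "card (?N \<inter> nbrs V E p) = lam" using lm[OF Suc.prems p sg_sym[OF sg True]] .
        ultimately show ?thesis using True vp deg[OF Suc.prems] A B by (simp add: vtyp_def)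
      next
        case False
        have "?N \<inter> {p} = {}" using False sg_sym[OF sg] by (auto simp: nbrs_def)
        moreover have "card (?N \<inter> nbrs V E p) = mu" using mu[OF Suc.prems p vp] False sg_sym[OF sg] by blast
        ultimately show ?thesis using False vp deg[OF Suc.prems] A B by (simp add: vtyp_def)
      qed
    qed
  qed
  finally show ?case using Suc by simp
qed

lemma srg_wl:
  assumes srg: "strongly_regular V E n d lam mu" and p: "p \<in> V"
  shows "image_mset (cr V E (portcol p) r) (mset_set V) = {#gcol d lam mu r 0#}
     + replicate_mset d (gcol d lam mu r 1) + replicate_mset (n - 1 - d) (gcol d lam mu r 2)"
proof -
  have sg: "simple_graph V E" and deg: "\<And>v. v \<in> V \<Longrightarrow> card (nbrs V E v) = d" and cV: "card V = n"
    using srg unfolding strongly_regular_def by auto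
  have irr: "\<not> E a a" for a using sg unfolding simple_graph_def by auto
  have fin: "finite V" using sg_fin[OF sg] .
  have "image_mset (cr V E (portcol p) r) (mset_set V) = image_mset (\<lambda>x. gcol d lam mu r (vtyp p E x)) (mset_set V)"
    by (rule image_mset_cong) (use fin srg_cr[OF srg p] in auto)
  also have "\<dots> = replicate_mset (card (V \<inter> {p})) (gcol d lam mu r 0)
     + replicate_mset (card (V \<inter> {x. x \<noteq> p \<and> E p x})) (gcol d lam mu r 1) + replicate_mset (card (V \<inter> {x. x \<noteq> p \<and> \<not> E p x})) (gcol d lam mu r 2)"
    by (rule img_split[OF fin]) (auto simp: vtyp_def)
  also have "\<dots> = {#gcol d lam mu r 0#}
     + replicate_mset d (gcol d lam mu r 1) + replicate_mset (n - 1 - d) (gcol d lam mu r 2)"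
  proof -
    have a: "V \<inter> {p} = {p}" using p by auto
    have b: "V \<inter> {x. x \<noteq> p \<and> E p x} = nbrs V E p" using irr by (auto simp: nbrs_def)
    have "V = (V \<inter> {x. x \<noteq> p \<and> \<not> E p x}) \<union> {p} \<union> nbrs V E p" using p by (auto simp: nbrs_def)
    moreover have "card ((V \<inter> {x. x \<noteq> p \<and> \<not> E p x}) \<union> {p} \<union> nbrs V E p)
        = card (V \<inter> {x. x \<noteq> p \<and> \<not> E p x}) + card {p} + card (nbrs V E p)"
    proof -
      have "card ((V \<inter> {x. x \<noteq> p \<and> \<not> E p x}) \<union> {p} \<union> nbrs V E p)
        = card ((V \<inter> {x. x \<noteq> p \<and> \<not> E p x}) \<union> {p}) + card (nbrs V E p)"
        by (rule card_Un_disjoint) (use fin irr nbrs_fin[OF sg] in \<open>auto simp: nbrs_def\<close>)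
      moreover have "card ((V \<inter> {x. x \<noteq> p \<and> \<not> E p x}) \<union> {p}) = card (V \<inter> {x. x \<noteq> p \<and> \<not> E p x}) + card {p}"
        by (rule card_Un_disjoint) (use fin in auto)
      ultimately show ?thesis by simp
    qed
    ultimately have "card V = card (V \<inter> {x. x \<noteq> p \<and> \<not> E p x}) + card {p} + card (nbrs V E p)"
      by simp
    hence c: "card (V \<inter> {x. x \<noteq> p \<and> \<not> E p x}) = n - 1 - d" using cV deg[OF p] by simp
    show ?thesis using a b c deg[OF p] by simp
  qed
  finally show ?thesis .
qed



definition dl :: "nat \<Rightarrow> 'a set \<Rightarrow> ('a \<Rightarrow> 'a \<Rightarrow> bool) \<Rightarrow> 'a \<Rightarrow> 'a set \<Rightarrow> ('a \<Rightarrow> 'a \<Rightarrow> bool) \<Rightarrow> 'a \<Rightarrow> 'a gv \<Rightarrow> 'a gv \<Rightarrow> clr crcol option" where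
  "dl r V1 E1 p1 V2 E2 p2 z v = (if v \<in> partV V1 V2 then Some (PC V1 E1 p1 V2 E2 p2 z r v)
      else if v = Pend then Some (Kc r) else None)"

lemma gv_cases: "v \<in> gadgetV V1 V2 \<Longrightarrow> v \<in> partV V1 V2 \<or> v = Conn \<or> v = Pend"
  unfolding gadgetV_def partV_def by auto

lemma pend_part:
  assumes c1: "cfg d (V1::'a set) E1 p1 V2 E2 p2 z" and c2: "cfg d (W1::'a set) F1 q1 W2 F2 q2 z'"
  and v: "v \<in> partV W1 W2" and m: "2 \<le> m"
  and eq: "GC V1 E1 p1 V2 E2 p2 z m Pend = GC W1 F1 q1 W2 F2 q2 z' m v"
  shows "PC W1 F1 q1 W2 F2 q2 z' r v = Kc r"
proof -
  from pend_lem[OF c1 c2 v m eq] have "d = 0" "isport q1 q2 v" "v \<noteq> z'" by auto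
  thus ?thesis using kc_lem[of W1 F1 q1 W2 F2 q2 z' v r] c2 by simp
qed

lemma final_pair:
  assumes c1: "cfg d (V1::'a set) E1 p1 V2 E2 p2 z" and c2: "cfg d (W1::'a set) F1 q1 W2 F2 q2 z'"
  and u: "u \<in> gadgetV V1 V2" and u': "u' \<in> gadgetV W1 W2" and m: "r + 2 \<le> m"
  and eq: "GC V1 E1 p1 V2 E2 p2 z m u = GC W1 F1 q1 W2 F2 q2 z' m u'"
  shows "dl r V1 E1 p1 V2 E2 p2 z u = dl r W1 F1 q1 W2 F2 q2 z' u'"
proof -
  have m2: "2 \<le> m" using m by simp
  have degeq: "card (nbrs (gadgetV V1 V2) (gadgetE E1 p1 E2 p2) u) = card (nbrs (gadgetV W1 W2) (gadgetE F1 q1 F2 q2) u')"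
    using cr_deg[OF _ eq] m by simp
  from gv_cases[OF u] gv_cases[OF u'] show ?thesis
  proof (elim disjE)
    assume a: "u \<in> partV V1 V2" "u' \<in> partV W1 W2"
    thus ?thesis using sim[OF c1 c2 a m eq] by (simp add: dl_def)
  next
    assume "u \<in> partV V1 V2" "u' = Conn" thus ?thesis using conn_sep[OF c2 c1 _ m2, of u] eq by simp
  next
    assume a: "u \<in> partV V1 V2" "u' = Pend"
    thus ?thesis using pend_part[OF c2 c1 a(1) m2, of r] eq by (simp add: dl_def)
  next
    assume "u = Conn" "u' \<in> partV W1 W2" thus ?thesis using conn_sep[OF c1 c2 _ m2, of u'] eq by simp
  next
    assume "u = Conn" "u' = Conn" thus ?thesis by (simp add: dl_def)
  next
    assume "u = Conn" "u' = Pend" thus ?thesis using degeq card_Conn[OF c1] card_Pend[of W1 W2 F1 q1 F2 q2] by simp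
  next
    assume a: "u = Pend" "u' \<in> partV W1 W2"
    thus ?thesis using pend_part[OF c1 c2 a(2) m2, of r] eq by (simp add: dl_def)
  next
    assume "u = Pend" "u' = Conn" thus ?thesis using degeq card_Conn[OF c2] card_Pend[of V1 V2 E1 p1 E2 p2] by simp
  next
    assume "u = Pend" "u' = Pend" thus ?thesis by (simp add: dl_def)
  qed
qed

lemma gv_mset: assumes "finite V1" "finite V2"
  shows "mset_set (gadgetV V1 V2) = mset_set (L ` V1) + mset_set (R ` V2) + {#Conn, Pend#}"
proof -
  have "gadgetV V1 V2 = (L ` V1 \<union> R ` V2) \<union> {Conn, Pend}" unfolding gadgetV_def by auto
  hence "mset_set (gadgetV V1 V2) = mset_set (L ` V1 \<union> R ` V2) + mset_set {Conn, Pend}"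
    by (simp only:) (rule mset_set_Union, use assms in auto)
  also have "mset_set (L ` V1 \<union> R ` V2) = mset_set (L ` V1) + mset_set (R ` V2)"
    using assms by (intro mset_set_Union) auto
  moreover have "mset_set {Conn, Pend} = {#Conn, Pend#}" by simp
  ultimately show ?thesis by simp
qed

lemma card_gv: assumes "finite V1" "finite V2"
  shows "card (gadgetV V1 V2) = card V1 + card V2 + 2"
proof -
  have "size (mset_set (gadgetV V1 V2)) = card V1 + card V2 + 2"
    unfolding gv_mset[OF assms] by (simp add: card_image inj_on_def)
  thus ?thesis by simp
qed

lemma part_img:
  assumes c: "cfg d V1 E1 p1 V2 E2 p2 z"
  shows "image_mset (PC V1 E1 p1 V2 E2 p2 z r) (mset_set (L ` V1)) = image_mset (cr V1 E1 (\<lambda>a. pcol p1 p2 z (L a)) r) (mset_set V1)"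
    "image_mset (PC V1 E1 p1 V2 E2 p2 z r) (mset_set (R ` V2)) = image_mset (cr V2 E2 (\<lambda>a. pcol p1 p2 z (R a)) r) (mset_set V2)"
proof -
  note cd = cfgD[OF c]
  have f1: "finite V1" "finite V2" using sg_fin cd by auto
  have "image_mset (PC V1 E1 p1 V2 E2 p2 z r) (mset_set (L ` V1)) = image_mset (PC V1 E1 p1 V2 E2 p2 z r) (image_mset L (mset_set V1))"
    by (simp add: image_mset_mset_set inj_on_def)
  also have "\<dots> = image_mset (cr V1 E1 (\<lambda>a. pcol p1 p2 z (L a)) r) (mset_set V1)"
    by (simp add: image_mset.compositionality) (rule image_mset_cong, use f1 cr_embed[of L V1 "partV V1 V2" "gadgetE E1 p1 E2 p2" E1 "pcol p1 p2 z" "\<lambda>a. pcol p1 p2 z (L a)"] nbrsP_L[OF c] in \<open>auto simp: inj_def\<close>)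
  finally show "image_mset (PC V1 E1 p1 V2 E2 p2 z r) (mset_set (L ` V1)) = image_mset (cr V1 E1 (\<lambda>a. pcol p1 p2 z (L a)) r) (mset_set V1)" .
  have "image_mset (PC V1 E1 p1 V2 E2 p2 z r) (mset_set (R ` V2)) = image_mset (PC V1 E1 p1 V2 E2 p2 z r) (image_mset R (mset_set V2))"
    by (simp add: image_mset_mset_set inj_on_def)
  also have "\<dots> = image_mset (cr V2 E2 (\<lambda>a. pcol p1 p2 z (R a)) r) (mset_set V2)"
    by (simp add: image_mset.compositionality) (rule image_mset_cong, use f1 cr_embed[of R V2 "partV V1 V2" "gadgetE E1 p1 E2 p2" E2 "pcol p1 p2 z" "\<lambda>a. pcol p1 p2 z (R a)"] nbrsP_R[OF c] in \<open>auto simp: inj_def\<close>)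
  finally show "image_mset (PC V1 E1 p1 V2 E2 p2 z r) (mset_set (R ` V2)) = image_mset (cr V2 E2 (\<lambda>a. pcol p1 p2 z (R a)) r) (mset_set V2)" .
qed

lemma dl_img:
  assumes c: "cfg d V1 E1 p1 V2 E2 p2 z"
  shows "image_mset (dl r V1 E1 p1 V2 E2 p2 z) (mset_set (gadgetV V1 V2))
    = image_mset Some (image_mset (cr V1 E1 (\<lambda>a. pcol p1 p2 z (L a)) r) (mset_set V1)
        + image_mset (cr V2 E2 (\<lambda>a. pcol p1 p2 z (R a)) r) (mset_set V2)) + {#None, Some (Kc r)#}"
proof -
  note cd = cfgD[OF c]
  have f1: "finite V1" "finite V2" using sg_fin cd by auto
  have a: "image_mset (dl r V1 E1 p1 V2 E2 p2 z) (mset_set (L ` V1)) = image_mset Some (image_mset (PC V1 E1 p1 V2 E2 p2 z r) (mset_set (L ` V1)))"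
    by (simp add: image_mset.compositionality) (rule image_mset_cong, use f1 in \<open>auto simp: dl_def partV_def\<close>)
  have b: "image_mset (dl r V1 E1 p1 V2 E2 p2 z) (mset_set (R ` V2)) = image_mset Some (image_mset (PC V1 E1 p1 V2 E2 p2 z r) (mset_set (R ` V2)))"
    by (simp add: image_mset.compositionality) (rule image_mset_cong, use f1 in \<open>auto simp: dl_def partV_def\<close>)
  show ?thesis unfolding gv_mset[OF f1] using a b part_img[OF c]
    by (simp add: dl_def)
qed



lemma pcol_LL: "pcol p1 p2 (L u) (L a) = indiv_port p1 u a" "pcol p1 p2 (L u) (R a) = portcol p2 a"
  "pcol p1 p2 (R u) (L a) = portcol p1 a" "pcol p1 p2 (R u) (R a) = indiv_port p2 u a"
  by (auto simp: pcol_def indiv_port_def portcol_def)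

theorem claim1:
  fixes VA VB :: "'a set" and EA EB :: "'a \<Rightarrow> 'a \<Rightarrow> bool" and a1 b1 :: 'a
    and n d lam mu :: nat
    and x y :: "'a gv" and u w :: 'a
    and CV :: "'a set" and CE :: "'a \<Rightarrow> 'a \<Rightarrow> bool" and c1 :: 'a
  assumes "strongly_regular VA EA n d lam mu"
    and "strongly_regular VB EB n d lam mu"
    and "a1 \<in> VA" and "b1 \<in> VB"
    and "(x = L u \<and> u \<in> VA \<and> CV = VA \<and> CE = EA \<and> c1 = a1)
       \<or> (x = R u \<and> u \<in> VB \<and> CV = VB \<and> CE = EB \<and> c1 = b1)"
    and "(y = L w \<or> y = R w) \<and> w \<in> VA"
    and "WL1 CV CE (indiv_port c1 u) \<noteq> WL1 VA EA (indiv_port a1 w)"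
  shows "WL1 (gadgetV VA VB) (gadgetE EA a1 EB b1) (indiv x)
       \<noteq> WL1 (gadgetV VA VA) (gadgetE EA a1 EA a1) (indiv y)"
proof
  assume WEQ: "WL1 (gadgetV VA VB) (gadgetE EA a1 EB b1) (indiv x)
       = WL1 (gadgetV VA VA) (gadgetE EA a1 EA a1) (indiv y)"
  note sA = assms(1)[unfolded strongly_regular_def] and sB = assms(2)[unfolded strongly_regular_def]
  have fA: "finite VA" and fB: "finite VB" using sA sB sg_fin by blast+
  have cA: "card VA = n" and cB: "card VB = n" using sA sB by auto
  have cX: "cfg d VA EA a1 VB EB b1 x" using sA sB assms(3,4,5) unfolding cfg_def by auto
  have cY: "cfg d VA EA a1 VA EA a1 y" using sA assms(3,6) unfolding cfg_def by auto
  define N where "N = 2 * n + 2"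
  have NX: "card (gadgetV VA VB) = N" and NY: "card (gadgetV VA VA) = N"
    using card_gv[OF fA fB] card_gv[OF fA fA] cA cB unfolding N_def by auto
  have eqN: "image_mset (GC VA EA a1 VB EB b1 x N) (mset_set (gadgetV VA VB))
      = image_mset (GC VA EA a1 VA EA a1 y N) (mset_set (gadgetV VA VA))"
    using WEQ unfolding WL1_def NX NY .
  have mN: "n + 2 \<le> N" unfolding N_def by simp
  have "image_mset (dl n VA EA a1 VB EB b1 x) (mset_set (gadgetV VA VB))
      = image_mset (dl n VA EA a1 VA EA a1 y) (mset_set (gadgetV VA VA))"
  proof (rule mset_transfer[OF fin_g[OF cX] fin_g[OF cY] eqN])
    show "\<forall>a\<in>gadgetV VA VB. \<forall>b\<in>gadgetV VA VB. GC VA EA a1 VB EB b1 x N a = GC VA EA a1 VB EB b1 x N b \<longrightarrow>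
        dl n VA EA a1 VB EB b1 x a = dl n VA EA a1 VB EB b1 x b"
      using final_pair[OF cX cX _ _ mN] by blast
    show "\<forall>a\<in>gadgetV VA VB. \<forall>b\<in>gadgetV VA VA. GC VA EA a1 VB EB b1 x N a = GC VA EA a1 VA EA a1 y N b \<longrightarrow>
        dl n VA EA a1 VB EB b1 x a = dl n VA EA a1 VA EA a1 y b"
      using final_pair[OF cX cY _ _ mN] by blast
    show "\<forall>a\<in>gadgetV VA VA. \<forall>b\<in>gadgetV VA VA. GC VA EA a1 VA EA a1 y N a = GC VA EA a1 VA EA a1 y N b \<longrightarrow>
        dl n VA EA a1 VA EA a1 y a = dl n VA EA a1 VA EA a1 y b"
      using final_pair[OF cY cY _ _ mN] by blast
  qed
  hence "image_mset Some (image_mset (cr VA EA (\<lambda>a. pcol a1 b1 x (L a)) n) (mset_set VA)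
        + image_mset (cr VB EB (\<lambda>a. pcol a1 b1 x (R a)) n) (mset_set VB))
       = image_mset Some (image_mset (cr VA EA (\<lambda>a. pcol a1 a1 y (L a)) n) (mset_set VA)
        + image_mset (cr VA EA (\<lambda>a. pcol a1 a1 y (R a)) n) (mset_set VA))"
    unfolding dl_img[OF cX] dl_img[OF cY] by simp
  hence "image_mset the (image_mset Some (image_mset (cr VA EA (\<lambda>a. pcol a1 b1 x (L a)) n) (mset_set VA)
        + image_mset (cr VB EB (\<lambda>a. pcol a1 b1 x (R a)) n) (mset_set VB)))
       = image_mset the (image_mset Some (image_mset (cr VA EA (\<lambda>a. pcol a1 a1 y (L a)) n) (mset_set VA)
        + image_mset (cr VA EA (\<lambda>a. pcol a1 a1 y (R a)) n) (mset_set VA)))" by simp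
  hence S: "image_mset (cr VA EA (\<lambda>a. pcol a1 b1 x (L a)) n) (mset_set VA)
        + image_mset (cr VB EB (\<lambda>a. pcol a1 b1 x (R a)) n) (mset_set VB)
       = image_mset (cr VA EA (\<lambda>a. pcol a1 a1 y (L a)) n) (mset_set VA)
        + image_mset (cr VA EA (\<lambda>a. pcol a1 a1 y (R a)) n) (mset_set VA)"
    by (simp add: image_mset.compositionality comp_def)
  have PA: "image_mset (cr VA EA (portcol a1) n) (mset_set VA) = image_mset (cr VB EB (portcol b1) n) (mset_set VB)"
    using srg_wl[OF assms(1,3)] srg_wl[OF assms(2,4)] by simp
  have WC: "WL1 CV CE (indiv_port c1 u) = image_mset (cr CV CE (indiv_port c1 u) n) (mset_set CV)"
    using assms(5) cA cB unfolding WL1_def by auto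
  have WD: "WL1 VA EA (indiv_port a1 w) = image_mset (cr VA EA (indiv_port a1 w) n) (mset_set VA)"
    using cA unfolding WL1_def by auto
  have "image_mset (cr CV CE (indiv_port c1 u) n) (mset_set CV) = image_mset (cr VA EA (indiv_port a1 w) n) (mset_set VA)"
    using assms(5,6)
  proof (elim disjE conjE)
    assume "x = L u" "CV = VA" "CE = EA" "c1 = a1" "y = L w"
    thus ?thesis using S PA by (simp add: pcol_LL cong del: image_mset_cong)
  next
    assume "x = L u" "CV = VA" "CE = EA" "c1 = a1" "y = R w"
    thus ?thesis using S PA by (simp add: pcol_LL add.commute cong del: image_mset_cong)
  next
    assume "x = R u" "CV = VB" "CE = EB" "c1 = b1" "y = L w"
    thus ?thesis using S PA by (simp add: pcol_LL add.commute cong del: image_mset_cong)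
  next
    assume "x = R u" "CV = VB" "CE = EB" "c1 = b1" "y = R w"
    thus ?thesis using S PA by (simp add: pcol_LL cong del: image_mset_cong)
  qed
  thus False using assms(7) WC WD by simp
qed


end
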